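(* For every connected twin-free graph $G$ with $n$ vertices, $i_{\max}(G)>\log_2(n)$.
   Context: $i_{\max}(G)$ denotes the number of maximal independent sets of $G$. A graph is twin-free if no two vertices have the same open neighbourhood. *)

theory Defs
  imports Complex_Main
begin

definition simple_graph :: "'a set \<Rightarrow> ('a \<Rightarrow> 'a \<Rightarrow> bool) \<Rightarrow> bool" where
  "simple_graph V E \<longleftrightarrow> finite V \<and> (\<forall>u v. E u v \<longrightarrow> E v u) \<and> (\<forall>v. \<not> E v v)
     \<and> (\<forall>u v. E u v \<longrightarrow> u \<in> V \<and> v \<in> V)"

definition open_nbhd :: "'a set \<Rightarrow> ('a \<Rightarrow> 'a \<Rightarrow> bool) \<Rightarrow> 'a \<Rightarrow> 'a set" where
  "open_nbhd V E v = {u \<in> V. E v u}"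

definition twin_free :: "'a set \<Rightarrow> ('a \<Rightarrow> 'a \<Rightarrow> bool) \<Rightarrow> bool" where
  "twin_free V E \<longleftrightarrow> (\<forall>u\<in>V. \<forall>v\<in>V. u \<noteq> v \<longrightarrow> open_nbhd V E u \<noteq> open_nbhd V E v)"

definition connected_graph :: "'a set \<Rightarrow> ('a \<Rightarrow> 'a \<Rightarrow> bool) \<Rightarrow> bool" where
  "connected_graph V E \<longleftrightarrow> V \<noteq> {} \<and>
     (\<forall>u\<in>V. \<forall>v\<in>V. (u, v) \<in> {(x, y). x \<in> V \<and> y \<in> V \<and> E x y}\<^sup>*)"

definition independent_set :: "'a set \<Rightarrow> ('a \<Rightarrow> 'a \<Rightarrow> bool) \<Rightarrow> 'a set \<Rightarrow> bool" where
  "independent_set V E S \<longleftrightarrow> S \<subseteq> V \<and> (\<forall>u\<in>S. \<forall>v\<in>S. \<not> E u v)"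

definition maximal_independent_set :: "'a set \<Rightarrow> ('a \<Rightarrow> 'a \<Rightarrow> bool) \<Rightarrow> 'a set \<Rightarrow> bool" where
  "maximal_independent_set V E S \<longleftrightarrow> independent_set V E S \<and>
     (\<forall>T. independent_set V E T \<and> S \<subseteq> T \<longrightarrow> T = S)"

definition i_max :: "'a set \<Rightarrow> ('a \<Rightarrow> 'a \<Rightarrow> bool) \<Rightarrow> nat" where
  "i_max V E = card {S. maximal_independent_set V E S}"

end

theory Submission
  imports Defs
begin

lemma mis_extend:
  assumes fin: "finite V" and T: "independent_set V E T"
  shows "\<exists>S. maximal_independent_set V E S \<and> T \<subseteq> S"
proof -
  let ?P = "\<lambda>S. independent_set V E S \<and> T \<subseteq> S"
  have b: "\<forall>y. ?P y \<longrightarrow> card y < card V + 1"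
    using fin by (auto simp: independent_set_def intro: card_mono le_imp_less_Suc)
  obtain S where S: "?P S" and mx: "\<forall>y. ?P y \<longrightarrow> card y \<le> card S"
    using ex_has_greatest_nat[of ?P T card "card V + 1"] T b by blast
  have "maximal_independent_set V E S"
    unfolding maximal_independent_set_def
  proof (intro conjI allI impI)
    show "independent_set V E S" using S by blast
    fix T' assume h: "independent_set V E T' \<and> S \<subseteq> T'"
    then have "finite T'" using fin by (auto simp: independent_set_def intro: finite_subset)
    moreover have "card T' \<le> card S" using mx h S by blast
    ultimately show "T' = S" using h card_subset_eq by (metis card_mono antisym)
  qed
  then show ?thesis using S by blast
qed

lemma sep:
  assumes g: "simple_graph V E" and u: "u \<in> V" and v: "v \<in> V"
    and nuv: "\<not> E u v" and uw: "E u w" and vw: "\<not> E v w"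
  shows "\<exists>S. maximal_independent_set V E S \<and> v \<in> S \<and> u \<notin> S"
proof -
  have w: "w \<in> V" using g uw by (auto simp: simple_graph_def)
  have "independent_set V E {v, w}"
    using g v w vw by (auto simp: independent_set_def simple_graph_def)
  then obtain S where S: "maximal_independent_set V E S" "{v,w} \<subseteq> S"
    using mis_extend g by (metis simple_graph_def)
  have "u \<notin> S"
  proof
    assume "u \<in> S"
    then show False using S uw by (auto simp: maximal_independent_set_def independent_set_def)
  qed
  then show ?thesis using S by blast
qed

theorem proposition2p3:
  fixes V :: "'a set" and E :: "'a \<Rightarrow> 'a \<Rightarrow> bool"
  assumes "simple_graph V E" and "connected_graph V E" and "twin_free V E"
  shows "real (i_max V E) > log 2 (real (card V))"
proof -
  have g: "simple_graph V E" by fact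
  have fin: "finite V" using g by (simp add: simple_graph_def)
  let ?M = "{S. maximal_independent_set V E S}"
  have finM: "finite ?M"
    by (rule finite_subset[of _ "Pow V"]) (auto simp: maximal_independent_set_def independent_set_def fin)
  have inV: "\<exists>S. maximal_independent_set V E S \<and> v \<in> S" if "v \<in> V" for v
  proof -
    have "independent_set V E {v}" using g that by (auto simp: independent_set_def simple_graph_def)
    then show ?thesis using mis_extend[OF fin] by blast
  qed
  define f where "f v = {S. maximal_independent_set V E S \<and> v \<in> S}" for v
  have inj: "inj_on f V"
  proof (rule inj_onI, rule ccontr)
    fix u v assume u: "u \<in> V" and v: "v \<in> V" and eq: "f u = f v" and ne: "u \<noteq> v"
    show False
    proof (cases "E u v")
      case True
      obtain S where S: "maximal_independent_set V E S" "u \<in> S" using inV u by blast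
      then have "S \<in> f v" using eq by (auto simp: f_def)
      then show False using S True by (auto simp: f_def maximal_independent_set_def independent_set_def)
    next
      case False
      have nvu: "\<not> E v u" using False g by (auto simp: simple_graph_def)
      have "open_nbhd V E u \<noteq> open_nbhd V E v" using assms(3) u v ne by (simp add: twin_free_def)
      then obtain w where "(E u w \<and> \<not> E v w) \<or> (E v w \<and> \<not> E u w)"
        unfolding open_nbhd_def by blast
      then show False
      proof
        assume "E u w \<and> \<not> E v w"
        then obtain S where "maximal_independent_set V E S" "v \<in> S" "u \<notin> S"
          using sep[OF g u v False] by blast
        then show False using eq by (auto simp: f_def set_eq_iff)
      next
        assume "E v w \<and> \<not> E u w"
        then obtain S where "maximal_independent_set V E S" "u \<in> S" "v \<notin> S"
          using sep[OF g v u nvu] by blast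
        then show False using eq by (auto simp: f_def set_eq_iff)
      qed
    qed
  qed
  have sub: "f ` V \<subseteq> Pow ?M - {{}}"
    using inV by (auto simp: f_def)
  have "card V \<le> card (Pow ?M - {{}})"
    using card_inj_on_le[OF inj sub] finM by simp
  also have "\<dots> = 2 ^ card ?M - 1"
    using finM by (simp add: card_Diff_singleton card_Pow)
  finally have le: "card V < 2 ^ i_max V E"
    unfolding i_max_def by (metis diff_less le_less_trans nat_zero_less_power_iff pos2 zero_less_one)
  show ?thesis
  proof (cases "card V = 0")
    case True
    have "i_max V E > 0"
    proof -
      have "independent_set V E {}" by (simp add: independent_set_def)
      then obtain S where "maximal_independent_set V E S" using mis_extend[OF fin] by blast
      then have "?M \<noteq> {}" by blast
      then show ?thesis using finM by (simp add: i_max_def card_gt_0_iff)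
    qed
    then show ?thesis using True by (simp add: log_def)
  next
    case False
    have "real (card V) < 2 powr real (i_max V E)"
      using le by (simp add: powr_realpow)
    then have "log 2 (real (card V)) < log 2 (2 powr real (i_max V E))"
      using False by (intro log_less) auto
    then show ?thesis by simp
  qed
qed

end
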